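(* Let $(X_i)_{i\in\mathbb{T}}$ ($\mathbb{T}$ one of $\mathbb{Z},\mathbb{N},\mathbb{N}\setminus\{0\}$) be a stationary $m$-dependent sequence of $\mathbb{R}^d$-valued random vectors such that $X_1$ has compact support $\mathbb{M}$. Let $\epsilon_0>0$ and suppose that for every $0<\epsilon<\epsilon_0$ there exists a constant $\kappa_\epsilon>0$ with $\rho_{m+1}(\epsilon)\ge\kappa_\epsilon$. Then for any $0<\epsilon<\epsilon_0$ and any $n\ge m+1$, $$\mathbb{P}\big(d_H(\mathbb{X}_n,\mathbb{M})>\epsilon\big)\le \frac{(1-\kappa_{\epsilon/2})^{[\frac12[\frac{n}{m+1}]]}}{\kappa_{\epsilon/4}},$$ where $[\cdot]$ is the integer part. Consequently, for any $\alpha\in(0,1)$ and any $n\ge n_0$, where $$n_0=\frac{2(m+1)}{\kappa_{\epsilon/2}}\Big(\log\frac1\alpha+\log\frac{1}{\kappa_{\epsilon/4}}\Big)+3(m+1),$$ one has $d_H(\mathbb{X}_n,\mathbb{M})\le\epsilon$ with probability at least $1-\alpha$.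
   Context: The sequence is $m$-dependent if for every $k$ the $\sigma$-fields $\sigma(X_i, i\le k)$ and $\sigma(X_i, i\ge k+m+1)$ are independent. $\mathbb{X}_n=\{X_1,\ldots,X_n\}$. For $p\ge1$ and $\epsilon>0$, $\rho_p(\epsilon)=\inf_{x\in\mathbb{M}_{dp}}\mathbb{P}\big(\|(X_1,\ldots,X_p)^t-x\|\le\epsilon\big)$, where $\mathbb{M}_{dp}\subset\mathbb{R}^{dp}$ is the support of $(X_1,\ldots,X_p)^t$ and the norm is Euclidean. Supports are smallest closed sets of full mass. $d_H$ is the Hausdorff distance $d_H(A,B)=\max(\sup_{x\in A}\inf_{y\in B}\|x-y\|,\sup_{x\in B}\inf_{y\in A}\|x-y\|)$. *)

theory Defs
  imports "HOL-Probability.Probability"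
begin

text \<open>Hausdorff distance, as in the paper (used here only for nonempty compact sets).\<close>
definition hausdorff_dist :: "'a::metric_space set \<Rightarrow> 'a set \<Rightarrow> real" where
  "hausdorff_dist A B =
     max (SUP x\<in>A. INF y\<in>B. dist x y) (SUP x\<in>B. INF y\<in>A. dist x y)"

definition rv_support :: "'a measure \<Rightarrow> ('a \<Rightarrow> 'b::topological_space) \<Rightarrow> 'b set" where
  "rv_support M Y = \<Inter> {C. closed C \<and> measure M {\<omega> \<in> space M. Y \<omega> \<in> C} = 1}"

text \<open>The block (X_1,...,X_p) as an element of R^{dp}, represented as a function
  on nat that is zero outside {0..<p}; the i-th entry is X_(i+1).\<close>
definition block :: "nat \<Rightarrow> (nat \<Rightarrow> 'a \<Rightarrow> real^'d) \<Rightarrow> 'a \<Rightarrow> nat \<Rightarrow> real^'d" where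
  "block p X \<omega> = (\<lambda>i. if i < p then X (Suc i) \<omega> else 0)"

definition dist_block :: "nat \<Rightarrow> (nat \<Rightarrow> real^'d) \<Rightarrow> (nat \<Rightarrow> real^'d) \<Rightarrow> real" where
  "dist_block p x y = sqrt (\<Sum>i<p. (norm (x i - y i))\<^sup>2)"

text \<open>Support of (X_1,...,X_p) in R^{dp} (closed sets taken inside the copy of R^{dp}).\<close>
definition block_support :: "'a measure \<Rightarrow> nat \<Rightarrow> (nat \<Rightarrow> 'a \<Rightarrow> real^'d) \<Rightarrow> (nat \<Rightarrow> real^'d) set" where
  "block_support M p X = \<Inter> {C. closed C \<and> C \<subseteq> {x. \<forall>i\<ge>p. x i = 0} \<and>
        measure M {\<omega> \<in> space M. block p X \<omega> \<in> C} = 1}"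

definition rho :: "'a measure \<Rightarrow> (nat \<Rightarrow> 'a \<Rightarrow> real^'d) \<Rightarrow> nat \<Rightarrow> real \<Rightarrow> real" where
  "rho M X p \<epsilon> = (INF x\<in>block_support M p X.
      measure M {\<omega> \<in> space M. dist_block p (block p X \<omega>) x \<le> \<epsilon>})"

definition stationary :: "'a measure \<Rightarrow> (nat \<Rightarrow> 'a \<Rightarrow> real^'d) \<Rightarrow> bool" where
  "stationary M X \<longleftrightarrow> (\<forall>k.
     distr M (PiM UNIV (\<lambda>_. borel)) (\<lambda>\<omega> i. X (i + k) \<omega>) =
     distr M (PiM UNIV (\<lambda>_. borel)) (\<lambda>\<omega> i. X i \<omega>))"

definition m_dependent :: "'a measure \<Rightarrow> nat \<Rightarrow> (nat \<Rightarrow> 'a \<Rightarrow> real^'d) \<Rightarrow> bool" where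
  "m_dependent M m X \<longleftrightarrow> (\<forall>k.
     prob_space.indep_var M
       (PiM {..k} (\<lambda>_. borel)) (\<lambda>\<omega>. restrict (\<lambda>i. X i \<omega>) {..k})
       (PiM {k+m+1..} (\<lambda>_. borel)) (\<lambda>\<omega>. restrict (\<lambda>i. X i \<omega>) {k+m+1..}))"

end

theory Submission
  imports Defs
begin


lemma (in prob_space) AE_Inter_closed:
  fixes Y :: "'a \<Rightarrow> 'b::second_countable_topology"
  assumes cl: "\<And>C. C \<in> F \<Longrightarrow> closed C"
    and one: "\<And>C. C \<in> F \<Longrightarrow> prob {\<omega>\<in>space M. Y \<omega> \<in> C} = 1"
  shows "AE \<omega> in M. Y \<omega> \<in> \<Inter>F"
proof -
  have "\<And>S. S \<in> uminus ` F \<Longrightarrow> open S" using cl by auto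
  then obtain G' where G': "G' \<subseteq> uminus ` F" "countable G'" "\<Union>G' = \<Union>(uminus ` F)"
    using Lindelof by metis
  define G where "G = uminus ` G'"
  have GF: "G \<subseteq> F" using G' unfolding G_def by auto
  have cG: "countable G" using G' unfolding G_def by auto
  have eq: "\<Inter>G = \<Inter>F"
  proof -
    have "- \<Inter>G = \<Union>G'" unfolding G_def by auto
    also have "\<dots> = - \<Inter>F" using G'(3) by auto
    finally show ?thesis by (metis double_complement)
  qed
  have "\<forall>C\<in>G. AE \<omega> in M. \<omega> \<in> {\<omega>\<in>space M. Y \<omega> \<in> C}"
    using GF one by (intro ballI AE_prob_1) auto
  then have "AE \<omega> in M. \<forall>C\<in>G. Y \<omega> \<in> C"
    by (simp add: AE_ball_countable[OF cG])
  moreover have "AE \<omega> in M. (\<forall>C\<in>G. Y \<omega> \<in> C) \<longrightarrow> Y \<omega> \<in> \<Inter>F"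
    using eq by (intro AE_I2) (metis InterI Inter_iff)
  ultimately show ?thesis by (rule AE_mp)
qed

lemma stat_same:
  fixes X :: "nat \<Rightarrow> 'a \<Rightarrow> real^'d"
  assumes rv: "\<And>i. X i \<in> borel_measurable M"
    and stat: "stationary M X" and A: "A \<in> sets borel"
  shows "measure M {\<omega>\<in>space M. X i \<omega> \<in> A} = measure M {\<omega>\<in>space M. X 0 \<omega> \<in> A}"
proof -
  have m: "(\<lambda>\<omega> j. X (j+k) \<omega>) \<in> measurable M (PiM UNIV (\<lambda>_. borel))" for k
    by (rule measurable_PiM_single') (auto simp: rv)
  have m0: "(\<lambda>f. f 0) \<in> measurable (PiM UNIV (\<lambda>_. borel)) (borel :: (real^'d) measure)"
    by (rule measurable_component_singleton) simp
  have "distr (distr M (PiM UNIV (\<lambda>_. borel)) (\<lambda>\<omega> j. X (j+i) \<omega>)) borel (\<lambda>f. f 0)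
      = distr (distr M (PiM UNIV (\<lambda>_. borel)) (\<lambda>\<omega> j. X (j+0) \<omega>)) borel (\<lambda>f. f 0)"
    using stat unfolding stationary_def by (metis add_0_right)
  then have "distr M borel (X i) = distr M borel (X 0)"
    using distr_distr[OF m0 m[of i]] distr_distr[OF m0 m[of 0]] by (simp add: o_def)
  then have "measure (distr M borel (X i)) A = measure (distr M borel (X 0)) A" by simp
  then show ?thesis using measure_distr[OF rv A] measure_distr[OF rv A]
    by (simp add: vimage_def Int_def conj_commute)
qed

lemma PiM_dist_set:
  fixes c :: "real^'d"
  assumes "i \<in> I"
  shows "{f \<in> space (PiM I (\<lambda>_. borel)). r < dist (f i) c} \<in> sets (PiM I (\<lambda>_. borel))"
proof -
  have o: "{x::real^'d. r < dist x c} \<in> sets borel"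
    by (intro borel_open open_Collect_less continuous_intros)
  have "(\<lambda>f. f i) -` {x. r < dist x c} \<inter> space (PiM I (\<lambda>_. borel)) \<in> sets (PiM I (\<lambda>_. borel :: (real^'d) measure))"
    by (rule measurable_sets[OF measurable_component_singleton[OF assms] o[unfolded sets_borel[symmetric]]])
  then show ?thesis by (simp add: vimage_def Int_def conj_commute)
qed

lemma (in prob_space) block_indep:
  fixes X :: "nat \<Rightarrow> 'a \<Rightarrow> real^'d" and c :: "real^'d"
  assumes rv: "\<And>i. X i \<in> borel_measurable M"
    and mdep: "m_dependent M m X"
    and q: "\<And>i. prob {\<omega>\<in>space M. r < dist (X i \<omega>) c} \<le> q"
  shows "prob {\<omega>\<in>space M. \<forall>j\<in>{..<J}. r < dist (X ((2*j+1)*(m+1)) \<omega>) c} \<le> q ^ J"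
proof (induction J)
  case 0
  then show ?case by simp
next
  case (Suc J)
  define k0 where "k0 = 2*J*(m+1)"
  define N1 where "N1 = PiM {..k0} (\<lambda>_. borel :: (real^'d) measure)"
  define N2 where "N2 = PiM {k0+m+1..} (\<lambda>_. borel :: (real^'d) measure)"
  define A where "A = {f\<in>space N1. \<forall>j\<in>{..<J}. r < dist (f ((2*j+1)*(m+1))) c}"
  define B where "B = {f\<in>space N2. r < dist (f ((2*J+1)*(m+1))) c}"
  have ind: "indep_var N1 (\<lambda>\<omega>. restrict (\<lambda>i. X i \<omega>) {..k0}) N2 (\<lambda>\<omega>. restrict (\<lambda>i. X i \<omega>) {k0+m+1..})"
    using mdep unfolding m_dependent_def N1_def N2_def by blast
  have idx1: "(2*j+1)*(m+1) \<in> {..k0}" if "j < J" for j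
  proof -
    have "(2*j+1)*(m+1) \<le> (2*J)*(m+1)" using that by (intro mult_right_mono) auto
    then show ?thesis unfolding k0_def by simp
  qed
  have idx2: "(2*J+1)*(m+1) \<in> {k0+m+1..}" unfolding k0_def by (simp add: algebra_simps)
  have As: "A \<in> sets N1" unfolding A_def N1_def
    by (intro sets.sets_Collect_finite_All PiM_dist_set idx1) auto
  have Bs: "B \<in> sets N2" unfolding B_def N2_def
    by (intro PiM_dist_set idx2)
  have e: "prob ((\<lambda>x. (restrict (\<lambda>i. X i x) {..k0}, restrict (\<lambda>i. X i x) {k0+m+1..})) -` (A \<times> B) \<inter> space M)
     = prob ((\<lambda>\<omega>. restrict (\<lambda>i. X i \<omega>) {..k0}) -` A \<inter> space M) * prob ((\<lambda>\<omega>. restrict (\<lambda>i. X i \<omega>) {k0+m+1..}) -` B \<inter> space M)"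
    by (rule indep_varD[OF ind As Bs])
  have e1: "(\<lambda>\<omega>. restrict (\<lambda>i. X i \<omega>) {..k0}) -` A \<inter> space M
     = {\<omega>\<in>space M. \<forall>j\<in>{..<J}. r < dist (X ((2*j+1)*(m+1)) \<omega>) c}"
    using idx1 unfolding A_def N1_def by (auto simp: space_PiM)
  have e2: "(\<lambda>\<omega>. restrict (\<lambda>i. X i \<omega>) {k0+m+1..}) -` B \<inter> space M
     = {\<omega>\<in>space M. r < dist (X ((2*J+1)*(m+1)) \<omega>) c}"
    using idx2 unfolding B_def N2_def by (auto simp: space_PiM)
  have e3: "(\<lambda>x. (restrict (\<lambda>i. X i x) {..k0}, restrict (\<lambda>i. X i x) {k0+m+1..})) -` (A \<times> B) \<inter> space M
     = {\<omega>\<in>space M. \<forall>j\<in>{..<Suc J}. r < dist (X ((2*j+1)*(m+1)) \<omega>) c}"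
  proof -
    have "(\<lambda>x. (restrict (\<lambda>i. X i x) {..k0}, restrict (\<lambda>i. X i x) {k0+m+1..})) -` (A \<times> B) \<inter> space M
      = ((\<lambda>\<omega>. restrict (\<lambda>i. X i \<omega>) {..k0}) -` A \<inter> space M) \<inter> ((\<lambda>\<omega>. restrict (\<lambda>i. X i \<omega>) {k0+m+1..}) -` B \<inter> space M)"
      by blast
    also have "\<dots> = {\<omega>\<in>space M. \<forall>j\<in>{..<Suc J}. r < dist (X ((2*j+1)*(m+1)) \<omega>) c}"
      unfolding e1 e2 by (auto simp: less_Suc_eq)
    finally show ?thesis .
  qed
  have "prob {\<omega>\<in>space M. \<forall>j\<in>{..<Suc J}. r < dist (X ((2*j+1)*(m+1)) \<omega>) c}
      = prob {\<omega>\<in>space M. \<forall>j\<in>{..<J}. r < dist (X ((2*j+1)*(m+1)) \<omega>) c} * prob {\<omega>\<in>space M. r < dist (X ((2*J+1)*(m+1)) \<omega>) c}"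
    using e e1 e2 e3 by simp
  also have "\<dots> \<le> q ^ J * q"
  proof -
    have "0 \<le> q" using q[of 0] measure_nonneg order_trans by blast
    then show ?thesis using Suc.IH q by (intro mult_mono) auto
  qed
  finally show ?case by (simp add: mult.commute)
qed

lemma hd_char:
  fixes xs S :: "'b::metric_space set"
  assumes fx: "finite xs" "xs \<noteq> {}" and S: "S \<noteq> {}" "bounded S"
  shows "\<epsilon> < hausdorff_dist xs S \<longleftrightarrow>
     (\<exists>x\<in>xs. \<epsilon> < infdist x S) \<or> (\<exists>y\<in>S. \<forall>x\<in>xs. \<epsilon> < dist y x)"
proof -
  have e1: "(SUP x\<in>xs. INF y\<in>S. dist x y) = (SUP x\<in>xs. infdist x S)"
    using S by (simp add: infdist_def)
  have a: "\<epsilon> < (SUP x\<in>xs. infdist x S) \<longleftrightarrow> (\<exists>x\<in>xs. \<epsilon> < infdist x S)"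
    using fx by (intro less_cSUP_iff) auto
  have fin: "\<epsilon> < (INF x\<in>xs. dist y x) \<longleftrightarrow> (\<forall>x\<in>xs. \<epsilon> < dist y x)" for y
    using fx by (simp add: finite_less_Inf_iff)
  obtain x0 where x0: "x0 \<in> xs" using fx by blast
  obtain a e where ae: "\<forall>y\<in>S. dist a y \<le> e" using S(2) unfolding bounded_def by blast
  have "bdd_above ((\<lambda>y. INF x\<in>xs. dist y x) ` S)"
  proof (rule bdd_aboveI2)
    fix y assume "y \<in> S"
    have "(INF x\<in>xs. dist y x) \<le> dist y x0" using x0 fx by (intro cINF_lower) auto
    also have "\<dots> \<le> dist y a + dist a x0" by (rule dist_triangle)
    also have "\<dots> \<le> e + dist a x0" using ae \<open>y\<in>S\<close> by (metis add_right_mono dist_commute)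
    finally show "(INF x\<in>xs. dist y x) \<le> e + dist a x0" .
  qed
  then have b: "\<epsilon> < (SUP y\<in>S. INF x\<in>xs. dist y x) \<longleftrightarrow> (\<exists>y\<in>S. \<forall>x\<in>xs. \<epsilon> < dist y x)"
    using S fin by (subst less_cSUP_iff) auto
  show ?thesis unfolding hausdorff_dist_def e1 less_max_iff_disj a b ..
qed

lemma dense_witness:
  fixes xs D :: "'b::metric_space set"
  assumes "finite xs" "y \<in> closure D" "\<forall>x\<in>xs. \<epsilon> < dist y x"
  shows "\<exists>d\<in>D. \<forall>x\<in>xs. \<epsilon> < dist d x"
proof (cases "xs = {}")
  case True
  then show ?thesis using assms(2) closure_empty by (metis empty_iff equals0I)
next
  case False
  define h where "h = Min ((\<lambda>x. dist y x) ` xs)"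
  have "\<epsilon> < h" unfolding h_def using assms False by simp
  then obtain d where d: "d \<in> D" "dist d y < h - \<epsilon>"
    using assms(2) unfolding closure_approachable by (meson diff_gt_0_iff_gt)
  have "\<epsilon> < dist d x" if "x \<in> xs" for x
  proof -
    have "h \<le> dist y x" unfolding h_def using assms that by simp
    moreover have "dist y x \<le> dist y d + dist d x" by (rule dist_triangle)
    ultimately show ?thesis using d by (simp add: dist_commute)
  qed
  then show ?thesis using d by blast
qed

lemma (in prob_space) packing:
  fixes Y :: "'a \<Rightarrow> 'b::{metric_space,second_countable_topology}"
  assumes Y[measurable]: "Y \<in> borel_measurable M" and fin: "finite C"
    and sep: "\<forall>c\<in>C. \<forall>c'\<in>C. c \<noteq> c' \<longrightarrow> 2*r < dist c c'"
    and low: "\<forall>c\<in>C. k \<le> prob {\<omega>\<in>space M. dist (Y \<omega>) c \<le> r}"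
  shows "real (card C) * k \<le> 1"
proof -
  define D where "D c = {\<omega>\<in>space M. dist (Y \<omega>) c \<le> r}" for c
  have "{\<omega>\<in>space M. dist (Y \<omega>) c \<le> r} \<in> events" for c by measurable
  then have Ds: "D ` C \<subseteq> events" unfolding D_def by auto
  have dj: "disjoint_family_on D C"
    unfolding disjoint_family_on_def
  proof (intro ballI impI)
    fix c c' assume c: "c \<in> C" "c' \<in> C" "c \<noteq> c'"
    show "D c \<inter> D c' = {}"
    proof (rule ccontr)
      assume "D c \<inter> D c' \<noteq> {}"
      then obtain \<omega> where "dist (Y \<omega>) c \<le> r" "dist (Y \<omega>) c' \<le> r" unfolding D_def by blast
      then have "dist c c' \<le> 2*r" using dist_triangle3[of c c' "Y \<omega>"] by (simp add: dist_commute)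
      then show False using sep c by force
    qed
  qed
  have "real (card C) * k = (\<Sum>c\<in>C. k)" by simp
  also have "\<dots> \<le> (\<Sum>c\<in>C. prob (D c))" using low unfolding D_def by (intro sum_mono) auto
  also have "\<dots> = prob (\<Union>c\<in>C. D c)" using finite_measure_finite_Union[OF fin Ds dj] by simp
  also have "\<dots> \<le> 1" by (rule prob_le_1)
  finally show ?thesis .
qed



theorem proposition4p1:
  fixes M :: "'a measure" and X :: "nat \<Rightarrow> 'a \<Rightarrow> real^'d"
    and m :: nat and \<epsilon>0 :: real and \<kappa> :: "real \<Rightarrow> real"
  assumes P: "prob_space M"
    and rv: "\<And>i. X i \<in> borel_measurable M"
    and stat: "stationary M X"
    and mdep: "m_dependent M m X"
    and cpt: "compact (rv_support M (X 1))"
    and eps0: "\<epsilon>0 > 0"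
    and kappa: "\<And>\<epsilon>. 0 < \<epsilon> \<Longrightarrow> \<epsilon> < \<epsilon>0 \<Longrightarrow> \<kappa> \<epsilon> > 0 \<and> rho M X (m + 1) \<epsilon> \<ge> \<kappa> \<epsilon>"
  shows "(\<forall>\<epsilon> n. 0 < \<epsilon> \<longrightarrow> \<epsilon> < \<epsilon>0 \<longrightarrow> n \<ge> m + 1 \<longrightarrow>
            {\<omega> \<in> space M. hausdorff_dist ((\<lambda>i. X i \<omega>) ` {1..n}) (rv_support M (X 1)) > \<epsilon>}
               \<in> sets M \<and>
            measure M {\<omega> \<in> space M. hausdorff_dist ((\<lambda>i. X i \<omega>) ` {1..n}) (rv_support M (X 1)) > \<epsilon>}
              \<le> (1 - \<kappa> (\<epsilon> / 2)) ^ ((n div (m + 1)) div 2) / \<kappa> (\<epsilon> / 4))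
       \<and> (\<forall>\<epsilon> \<alpha> n. 0 < \<epsilon> \<longrightarrow> \<epsilon> < \<epsilon>0 \<longrightarrow> 0 < \<alpha> \<longrightarrow> \<alpha> < 1 \<longrightarrow>
            real n \<ge> 2 * real (m + 1) / \<kappa> (\<epsilon> / 2) * (ln (1 / \<alpha>) + ln (1 / \<kappa> (\<epsilon> / 4)))
                     + 3 * real (m + 1) \<longrightarrow>
            measure M {\<omega> \<in> space M. hausdorff_dist ((\<lambda>i. X i \<omega>) ` {1..n}) (rv_support M (X 1)) \<le> \<epsilon>}
              \<ge> 1 - \<alpha>)"
proof -
  interpret prob_space M by (rule P)
  note rv[measurable]
  define S where "S = rv_support M (X 1)"
  define BS where "BS = block_support M (m+1) X"
  define T where "T = (\<lambda>z. z 0) ` BS"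
  have evb: "{\<omega>\<in>space M. X i \<omega> \<in> A} \<in> events" if "A \<in> sets borel" for A i
    using measurable_sets[OF rv[of i] that] by (simp add: vimage_def Int_def conj_commute)
  have Scl: "closed S" unfolding S_def rv_support_def by (intro closed_Inter) auto
  have Sev: "{\<omega>\<in>space M. X i \<omega> \<in> S} \<in> events" for i by (rule evb[OF borel_closed[OF Scl]])
  have "AE \<omega> in M. X 1 \<omega> \<in> S" unfolding S_def rv_support_def
    by (rule AE_Inter_closed) auto
  then have S1: "prob {\<omega>\<in>space M. X 1 \<omega> \<in> S} = 1"
    using prob_eq_1[OF Sev[of 1]] by simp
  have Si: "prob {\<omega>\<in>space M. X i \<omega> \<in> S} = 1" for i
    using S1 stat_same[OF rv stat borel_closed[OF Scl], of i] stat_same[OF rv stat borel_closed[OF Scl], of 1]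
    by simp
  have Sne: "S \<noteq> {}"
  proof
    assume "S = {}"
    then show False using S1 by simp
  qed
  have AES: "AE \<omega> in M. \<forall>i. X i \<omega> \<in> S"
    unfolding AE_all_countable using prob_eq_1[OF Sev] Si by simp
  have Sbd: "bounded S" using cpt unfolding S_def by (rule compact_imp_bounded)
  have "AE \<omega> in M. block (m+1) X \<omega> \<in> BS" unfolding BS_def block_support_def
    by (rule AE_Inter_closed) auto
  then have "AE \<omega> in M. X 1 \<omega> \<in> closure T"
  proof (rule AE_mp, intro AE_I2 impI)
    fix \<omega> assume "block (m+1) X \<omega> \<in> BS"
    then have "block (m+1) X \<omega> 0 \<in> T" unfolding T_def by blast
    then show "X 1 \<omega> \<in> closure T" using closure_subset by (auto simp: block_def)
  qed
  then have "prob {\<omega>\<in>space M. X 1 \<omega> \<in> closure T} = 1"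
    using prob_eq_1[OF evb[OF borel_closed[OF closed_closure]]] by simp
  then have S_T: "S \<subseteq> closure T" unfolding S_def rv_support_def by (intro Inter_lower) auto
  have Tne: "T \<noteq> {}" using Sne S_T by auto
  have low: "\<kappa> r \<le> prob {\<omega>\<in>space M. dist (X i \<omega>) c \<le> r}" if "c \<in> T" "0 < r" "r < \<epsilon>0" for c r i
  proof -
    obtain z where z: "z \<in> BS" "c = z 0" using \<open>c \<in> T\<close> unfolding T_def by blast
    have cA: "{x. dist x c \<le> r} \<in> sets borel"
      by (intro borel_closed closed_Collect_le continuous_intros)
    have "\<kappa> r \<le> rho M X (m+1) r" using kappa[OF that(2,3)] by simp
    also have "\<dots> \<le> prob {\<omega>\<in>space M. dist_block (m+1) (block (m+1) X \<omega>) z \<le> r}"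
      unfolding rho_def BS_def[symmetric] using z(1)
      by (intro cINF_lower bdd_belowI[of _ 0]) auto
    also have "\<dots> \<le> prob {\<omega>\<in>space M. X 1 \<omega> \<in> {x. dist x c \<le> r}}"
    proof (rule finite_measure_mono)
      show "{\<omega>\<in>space M. X 1 \<omega> \<in> {x. dist x c \<le> r}} \<in> events" by (rule evb[OF cA])
      show "{\<omega>\<in>space M. dist_block (m+1) (block (m+1) X \<omega>) z \<le> r} \<subseteq> {\<omega>\<in>space M. X 1 \<omega> \<in> {x. dist x c \<le> r}}"
      proof safe
        fix \<omega> assume \<omega>: "\<omega> \<in> space M" "dist_block (m+1) (block (m+1) X \<omega>) z \<le> r"
        have "(norm (block (m+1) X \<omega> 0 - z 0))\<^sup>2 \<le> (\<Sum>i<m+1. (norm (block (m+1) X \<omega> i - z i))\<^sup>2)"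
          by (rule member_le_sum) auto
        then have "sqrt ((norm (block (m+1) X \<omega> 0 - z 0))\<^sup>2) \<le> dist_block (m+1) (block (m+1) X \<omega>) z"
          unfolding dist_block_def by (rule real_sqrt_le_mono)
        then have "norm (X 1 \<omega> - c) \<le> r" using \<omega> z by (simp add: block_def)
        then show "dist (X 1 \<omega>) c \<le> r" by (simp add: dist_norm)
      qed
    qed
    also have "\<dots> = prob {\<omega>\<in>space M. X i \<omega> \<in> {x. dist x c \<le> r}}"
      using stat_same[OF rv stat cA, of i] stat_same[OF rv stat cA, of 1] by simp
    finally show ?thesis by simp
  qed
  have k1: "0 < \<kappa> r \<and> \<kappa> r \<le> 1" if "0 < r" "r < \<epsilon>0" for r
  proof -
    obtain c where "c \<in> T" using Tne by blast
    then show ?thesis using low[OF \<open>c \<in> T\<close> that, of 0] prob_le_1 kappa[OF that] by (meson order_trans)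
  qed
  have part1: "{\<omega> \<in> space M. hausdorff_dist ((\<lambda>i. X i \<omega>) ` {1..n}) S > \<epsilon>} \<in> sets M \<and>
            measure M {\<omega> \<in> space M. hausdorff_dist ((\<lambda>i. X i \<omega>) ` {1..n}) S > \<epsilon>}
              \<le> (1 - \<kappa> (\<epsilon> / 2)) ^ ((n div (m + 1)) div 2) / \<kappa> (\<epsilon> / 4)"
    if e: "0 < \<epsilon>" "\<epsilon> < \<epsilon>0" and nm: "n \<ge> m + 1" for \<epsilon> n
  proof -
    have e4: "0 < \<epsilon>/4" "\<epsilon>/4 < \<epsilon>0" and e2: "0 < \<epsilon>/2" "\<epsilon>/2 < \<epsilon>0" using e by auto
    define k4 where "k4 = \<kappa> (\<epsilon>/4)"
    define q where "q = 1 - \<kappa> (\<epsilon>/2)"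
    define J where "J = (n div (m + 1)) div 2"
    have k4: "0 < k4" "k4 \<le> 1" using k1[OF e4] unfolding k4_def by auto
    have q0: "0 \<le> q" using k1[OF e2] unfolding q_def by auto
    define sep where "sep C \<longleftrightarrow> finite C \<and> C \<subseteq> T \<and> (\<forall>c\<in>C. \<forall>c'\<in>C. c \<noteq> c' \<longrightarrow> 2*(\<epsilon>/4) < dist c c')" for C
    have cardb: "real (card C) * k4 \<le> 1" if "sep C" for C
      using packing[OF rv[of 1], of C "\<epsilon>/4" k4] that low[OF _ e4] unfolding sep_def k4_def by auto
    have cardlt: "card C < nat \<lceil>1/k4\<rceil> + 1" if "sep C" for C
    proof -
      have "real (card C) \<le> 1/k4" using cardb[OF that] k4 by (simp add: field_simps)
      also have "\<dots> \<le> real (nat \<lceil>1/k4\<rceil>)" by (rule real_nat_ceiling_ge)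
      finally have "card C \<le> nat \<lceil>1/k4\<rceil>" by (simp only: of_nat_le_iff)
      then show ?thesis by simp
    qed
    have "sep {}" unfolding sep_def by simp
    then obtain C where sepC: "sep C" and maxC: "\<And>C'. sep C' \<Longrightarrow> card C' \<le> card C"
      using ex_has_greatest_nat[of sep "{}" card "nat \<lceil>1/k4\<rceil> + 1"] cardlt by blast
    have cover: "\<exists>c\<in>C. dist t c \<le> \<epsilon>/2" if "t \<in> T" for t
    proof (rule ccontr)
      assume "\<not> (\<exists>c\<in>C. dist t c \<le> \<epsilon>/2)"
      then have far: "\<forall>c\<in>C. \<epsilon>/2 < dist t c" by auto
      then have tC: "t \<notin> C" using e(1) by fastforce
      have "sep (insert t C)" using sepC far that unfolding sep_def by (auto simp: dist_commute)
      then have "card (insert t C) \<le> card C" by (rule maxC)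
      then show False using tC sepC unfolding sep_def by simp
    qed
    define F where "F c = {\<omega>\<in>space M. \<forall>i\<in>{1..n}. \<epsilon>/2 < dist (X i \<omega>) c}" for c
    have Fs: "F c \<in> events" for c unfolding F_def
      by (intro sets.sets_Collect_finite_All) measurable
    have Fc: "prob (F c) \<le> q ^ J" if "c \<in> C" for c
    proof -
      have cT: "c \<in> T" using sepC that unfolding sep_def by auto
      have qb: "prob {\<omega>\<in>space M. \<epsilon>/2 < dist (X i \<omega>) c} \<le> q" for i
      proof -
        have ev: "{\<omega>\<in>space M. dist (X i \<omega>) c \<le> \<epsilon>/2} \<in> events" by measurable
        have "{\<omega>\<in>space M. \<epsilon>/2 < dist (X i \<omega>) c} = space M - {\<omega>\<in>space M. dist (X i \<omega>) c \<le> \<epsilon>/2}" by auto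
        then show ?thesis using prob_compl[OF ev] low[OF cT e2, of i] unfolding q_def by simp
      qed
      have idx: "(2*j+1)*(m+1) \<in> {1..n}" if "j \<in> {..<J}" for j
      proof -
        have "2*j+1 \<le> n div (m+1)" using that unfolding J_def by auto
        then have "(2*j+1)*(m+1) \<le> n div (m+1) * (m+1)" by (rule mult_right_mono) simp
        also have "\<dots> \<le> n" by (rule div_times_less_eq_dividend)
        finally show ?thesis by simp
      qed
      have "prob (F c) \<le> prob {\<omega>\<in>space M. \<forall>j\<in>{..<J}. \<epsilon>/2 < dist (X ((2*j+1)*(m+1)) \<omega>) c}"
      proof (rule finite_measure_mono)
        show "F c \<subseteq> {\<omega>\<in>space M. \<forall>j\<in>{..<J}. \<epsilon>/2 < dist (X ((2*j+1)*(m+1)) \<omega>) c}"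
          unfolding F_def using idx by blast
        show "{\<omega>\<in>space M. \<forall>j\<in>{..<J}. \<epsilon>/2 < dist (X ((2*j+1)*(m+1)) \<omega>) c} \<in> events"
          by (intro sets.sets_Collect_finite_All) measurable
      qed
      also have "\<dots> \<le> q ^ J" by (rule block_indep[OF rv mdep qb])
      finally show ?thesis .
    qed
    obtain D where D: "countable D" "D \<subseteq> S" "S \<subseteq> closure D" by (rule separable)
    have fx: "finite ((\<lambda>i. X i \<omega>) ` {1..n})" "(\<lambda>i. X i \<omega>) ` {1..n} \<noteq> {}" for \<omega>
      using nm by auto
    have Hchar: "\<epsilon> < hausdorff_dist ((\<lambda>i. X i \<omega>) ` {1..n}) S \<longleftrightarrow>
       (\<exists>i\<in>{1..n}. \<epsilon> < infdist (X i \<omega>) S) \<or> (\<exists>d\<in>D. \<forall>i\<in>{1..n}. \<epsilon> < dist d (X i \<omega>))" for \<omega>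
    proof -
      have "(\<exists>y\<in>S. \<forall>x\<in>(\<lambda>i. X i \<omega>) ` {1..n}. \<epsilon> < dist y x) \<longleftrightarrow> (\<exists>d\<in>D. \<forall>i\<in>{1..n}. \<epsilon> < dist d (X i \<omega>))"
      proof
        assume "\<exists>y\<in>S. \<forall>x\<in>(\<lambda>i. X i \<omega>) ` {1..n}. \<epsilon> < dist y x"
        then obtain y where y: "y \<in> S" "\<forall>x\<in>(\<lambda>i. X i \<omega>) ` {1..n}. \<epsilon> < dist y x" by blast
        have "y \<in> closure D" using D(3) y(1) by blast
        from dense_witness[OF fx(1) this y(2)] obtain d where "d \<in> D" "\<forall>x\<in>(\<lambda>i. X i \<omega>) ` {1..n}. \<epsilon> < dist d x"
          by blast
        then show "\<exists>d\<in>D. \<forall>i\<in>{1..n}. \<epsilon> < dist d (X i \<omega>)" by auto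
      next
        assume "\<exists>d\<in>D. \<forall>i\<in>{1..n}. \<epsilon> < dist d (X i \<omega>)"
        then show "\<exists>y\<in>S. \<forall>x\<in>(\<lambda>i. X i \<omega>) ` {1..n}. \<epsilon> < dist y x" using D(2) by auto
      qed
      then show ?thesis unfolding hd_char[OF fx Sne Sbd] by auto
    qed
    define H where "H = {\<omega> \<in> space M. hausdorff_dist ((\<lambda>i. X i \<omega>) ` {1..n}) S > \<epsilon>}"
    have Heq: "H = {\<omega> \<in> space M. (\<exists>i\<in>{1..n}. \<epsilon> < infdist (X i \<omega>) S) \<or> (\<exists>d\<in>D. \<forall>i\<in>{1..n}. \<epsilon> < dist d (X i \<omega>))}"
      unfolding H_def Hchar ..
    have infm[measurable]: "(\<lambda>\<omega>. infdist (X i \<omega>) S) \<in> borel_measurable M" for i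
      by (rule measurable_compose[OF rv borel_measurable_continuous_onI[OF continuous_on_infdist[OF continuous_on_id]]])
    have Hs: "H \<in> events" unfolding Heq
    proof (rule sets.sets_Collect_disj)
      show "{\<omega> \<in> space M. \<exists>i\<in>{1..n}. \<epsilon> < infdist (X i \<omega>) S} \<in> events"
        by (intro sets.sets_Collect_finite_Ex) measurable
      show "{\<omega> \<in> space M. \<exists>d\<in>D. \<forall>i\<in>{1..n}. \<epsilon> < dist d (X i \<omega>)} \<in> events"
        by (intro sets.sets_Collect_countable_Ex' sets.sets_Collect_finite_All D) measurable
    qed
    have "AE \<omega> in M. \<omega> \<in> H \<longrightarrow> \<omega> \<in> (\<Union>c\<in>C. F c)"
      using AES
    proof (rule AE_mp, intro AE_I2 impI)
      fix \<omega> assume \<omega>S: "\<forall>i. X i \<omega> \<in> S" and \<omega>H: "\<omega> \<in> H"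
      then have "\<omega> \<in> space M" unfolding H_def by auto
      from \<omega>H have "(\<exists>i\<in>{1..n}. \<epsilon> < infdist (X i \<omega>) S) \<or> (\<exists>d\<in>D. \<forall>i\<in>{1..n}. \<epsilon> < dist d (X i \<omega>))"
        using \<omega>H unfolding H_def Hchar by simp
      moreover have "\<not> (\<exists>i\<in>{1..n}. \<epsilon> < infdist (X i \<omega>) S)" using \<omega>S e(1) by auto
      ultimately obtain d where d: "d \<in> D" "\<forall>i\<in>{1..n}. \<epsilon> < dist d (X i \<omega>)" by blast
      then have "d \<in> closure T" using D(2) S_T by auto
      moreover have "\<forall>x\<in>(\<lambda>i. X i \<omega>) ` {1..n}. \<epsilon> < dist d x" using d by auto
      ultimately obtain t where t: "t \<in> T" "\<forall>x\<in>(\<lambda>i. X i \<omega>) ` {1..n}. \<epsilon> < dist t x"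
        using dense_witness[OF fx(1)] by metis
      obtain c where c: "c \<in> C" "dist t c \<le> \<epsilon>/2" using cover[OF t(1)] by blast
      have "\<epsilon>/2 < dist (X i \<omega>) c" if "i \<in> {1..n}" for i
      proof -
        have "\<epsilon> < dist t (X i \<omega>)" using t(2) that by auto
        moreover have "dist t (X i \<omega>) \<le> dist t c + dist c (X i \<omega>)" by (rule dist_triangle)
        ultimately show ?thesis using c by (simp add: dist_commute)
      qed
      then show "\<omega> \<in> (\<Union>c\<in>C. F c)" using c(1) \<open>\<omega> \<in> space M\<close> unfolding F_def by blast
    qed
    then have "prob H \<le> prob (\<Union>c\<in>C. F c)"
      using Fs sepC unfolding sep_def by (intro finite_measure_mono_AE sets.finite_UN) auto
    also have "\<dots> \<le> (\<Sum>c\<in>C. prob (F c))"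
      using sepC Fs unfolding sep_def by (intro finite_measure_subadditive_finite) auto
    also have "\<dots> \<le> (\<Sum>c\<in>C. q ^ J)" using Fc by (intro sum_mono) auto
    also have "\<dots> = real (card C) * q ^ J" by simp
    also have "\<dots> \<le> q ^ J / k4"
    proof -
      have "real (card C) * q ^ J * k4 \<le> q ^ J"
        using cardb[OF sepC] q0 mult_left_mono[of "real (card C) * k4" 1 "q^J"]
        by (simp add: algebra_simps)
      then show ?thesis using k4 by (simp add: field_simps)
    qed
    finally show ?thesis using Hs unfolding H_def q_def k4_def J_def by simp
  qed
  show ?thesis
  proof (intro conjI allI impI)
    fix \<epsilon> :: real and n :: nat
    assume "0 < \<epsilon>" "\<epsilon> < \<epsilon>0" "m + 1 \<le> n"
    then show "{\<omega> \<in> space M. hausdorff_dist ((\<lambda>i. X i \<omega>) ` {1..n}) (rv_support M (X 1)) > \<epsilon>} \<in> sets M"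
      "measure M {\<omega> \<in> space M. hausdorff_dist ((\<lambda>i. X i \<omega>) ` {1..n}) (rv_support M (X 1)) > \<epsilon>}
              \<le> (1 - \<kappa> (\<epsilon> / 2)) ^ ((n div (m + 1)) div 2) / \<kappa> (\<epsilon> / 4)"
      using part1 unfolding S_def by auto
  next
    fix \<epsilon> \<alpha> :: real and n :: nat
    assume e: "0 < \<epsilon>" "\<epsilon> < \<epsilon>0" "0 < \<alpha>" "\<alpha> < 1"
      and nb: "2 * real (m + 1) / \<kappa> (\<epsilon> / 2) * (ln (1 / \<alpha>) + ln (1 / \<kappa> (\<epsilon> / 4)))
                     + 3 * real (m + 1) \<le> real n"
    define k2 where "k2 = \<kappa> (\<epsilon> / 2)"
    define k4 where "k4 = \<kappa> (\<epsilon> / 4)"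
    define L where "L = ln (1 / \<alpha>) + ln (1 / k4)"
    define J where "J = (n div (m + 1)) div 2"
    have k2: "0 < k2" "k2 \<le> 1" unfolding k2_def using k1[of "\<epsilon>/2"] e by auto
    have k4: "0 < k4" "k4 \<le> 1" unfolding k4_def using k1[of "\<epsilon>/4"] e by auto
    have lk: "ln k4 \<le> 0" "ln \<alpha> < 0" using e k4 by auto
    have L0: "0 \<le> L" unfolding L_def using e k4 by (simp add: ln_div) (use lk in linarith)
    have "0 \<le> 2 * real (m + 1) / k2 * L" using L0 k2 by simp
    then have n3: "3 * real (m + 1) \<le> real n" using nb unfolding k2_def k4_def L_def by linarith
    then have "real (m + 1) \<le> real n" using of_nat_0_le_iff[of "m+1", where 'a=real] by (smt (verit))
    then have nm: "m + 1 \<le> n" by (simp only: of_nat_le_iff)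
    define H where "H = {\<omega> \<in> space M. hausdorff_dist ((\<lambda>i. X i \<omega>) ` {1..n}) S > \<epsilon>}"
    have Hs: "H \<in> events" and Hb: "prob H \<le> (1 - k2) ^ J / k4"
      using part1[OF e(1,2) nm] unfolding H_def k2_def k4_def J_def by auto
    have nJ: "n < (2*J+2)*(m+1)"
    proof -
      have "n = n div (m+1) * (m+1) + n mod (m+1)" by (rule div_mult_mod_eq[symmetric])
      moreover have "n mod (m+1) < m+1" by simp
      moreover have "n div (m+1) \<le> 2*J+1" unfolding J_def by linarith
      ultimately have "n < n div (m+1) * (m+1) + (m+1)" by linarith
      also have "\<dots> = (n div (m+1) + 1) * (m+1)" by (simp add: algebra_simps)
      also have "\<dots> \<le> (2*J+2)*(m+1)" using \<open>n div (m+1) \<le> 2*J+1\<close> by (intro mult_right_mono) auto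
      finally show ?thesis .
    qed
    then have "real n < real ((2*J+2)*(m+1))" by (simp only: of_nat_less_iff)
    then have "real n < (2*real J+2)*real (m+1)" by (simp add: algebra_simps)
    then have "real (m+1) * (2 * L / k2 + 3) < real (m+1) * (2*real J+2)"
      using nb unfolding k2_def[symmetric] k4_def[symmetric] L_def[symmetric] by (simp add: algebra_simps)
    then have "2 * L / k2 + 3 < 2*real J+2" by (simp add: mult_less_cancel_left_pos)
    then have "L / k2 < real J" by simp
    then have kJ: "L \<le> k2 * real J" using k2 by (simp add: pos_divide_less_eq mult.commute)
    have "(1 - k2) ^ J \<le> exp (-k2) ^ J"
      using k2 exp_ge_add_one_self[of "-k2"] by (intro power_mono) auto
    also have "\<dots> = exp (-(k2 * real J))" using exp_of_nat_mult[of J "-k2"] by (simp add: mult.commute)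
    also have "\<dots> \<le> exp (-L)" using kJ by simp
    also have "\<dots> = \<alpha> * k4" unfolding L_def using e k4
      by (simp add: ln_div exp_add)
    finally have "(1 - k2) ^ J / k4 \<le> \<alpha>" using k4 by (simp add: divide_le_eq)
    then have "prob H \<le> \<alpha>" using Hb by linarith
    moreover have "{\<omega> \<in> space M. hausdorff_dist ((\<lambda>i. X i \<omega>) ` {1..n}) (rv_support M (X 1)) \<le> \<epsilon>} = space M - H"
      unfolding H_def S_def by auto
    ultimately show "1 - \<alpha> \<le> measure M {\<omega> \<in> space M. hausdorff_dist ((\<lambda>i. X i \<omega>) ` {1..n}) (rv_support M (X 1)) \<le> \<epsilon>}"
      using prob_compl[OF Hs] by simp
  qed
qed

end
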